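(* Let $d\ge1$, $\mathcal D$ a dyadic grid in $\mathbb R^d$, $\mathcal Q\subset\mathcal D$, $\tau=\{\tau_Q\}_{Q\in\mathcal Q}$ nonnegative constants, $\sigma,w$ weights, $1<q<\infty$, and $f\ge0$ bounded with compact support. Let $\Omega_k=\{\overline T(f\sigma)>2^k\}$, let $\mathcal Q_k$ be Whitney collections for $\Omega_k$ as in the context, and for $Q\in\mathcal Q_k$ let $E_k(Q)=Q\cap(\Omega_{k+2}\setminus\Omega_{k+3})$. Then for all $k$, all $Q\in\mathcal Q_k$ and all $x\in E_k(Q)$, $$2^k\le \overline T^{\rm in}_{Q^{(1)}}(\mathbf 1_{Q^{(1)}}f\sigma)(x).$$
   Context: $\mathbb E_R(g)=|R|^{-1}\int_R g$. $\overline T(g\sigma)(x)=\big(\sum_{R\in\mathcal Q}|\tau_R\mathbb E_R(g\sigma)\mathbf 1_R(x)|^q\big)^{1/q}$, and for a dyadic cube $P$, $\overline T^{\rm in}_P(g\sigma)(x)=\big(\sum_{R\in\mathcal Q,\ R\subseteq P}|\tau_R\mathbb E_R(g\sigma)\mathbf 1_R(x)|^q\big)^{1/q}$. $Q^{(1)}$ is the dyadic parent of $Q$, $Q^{(j+1)}=(Q^{(j)})^{(1)}$. Whitney collections: for each $k$, $\mathcal Q_k$ is a collection of pairwise disjoint dyadic cubes with $\Omega_k=\bigcup_{Q\in\mathcal Q_k}Q$; $Q^{(1)}\subset\Omega_k$ and $Q^{(2)}\cap\Omega_k^c\neq\emptyset$ for $Q\in\mathcal Q_k$; $\sum_{Q\in\mathcal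 Q_k}\mathbf 1_{Q^{(1)}}\lesssim\mathbf 1_{\Omega_k}$; $\sup_{Q\in\mathcal Q_k}\#\{Q'\in\mathcal Q_k:Q'\cap Q^{(1)}\ne\emptyset\}\lesssim1$; and $Q\in\mathcal Q_k$, $Q'\in\mathcal Q_l$, $Q\subsetneq Q'$ implies $k>l$. *)

theory Defs
  imports "HOL-Analysis.Analysis"
begin

type_synonym 'n pt = "real^'n"

definition hcube :: "'n::finite pt \<Rightarrow> real \<Rightarrow> 'n pt set" where
  "hcube a s = {x. \<forall>i. a $ i \<le> x $ i \<and> x $ i < a $ i + s}"

definition dyadic_grid :: "(int \<Rightarrow> 'n::finite pt set set) \<Rightarrow> bool" where
  "dyadic_grid D \<longleftrightarrow>
     (\<forall>k. (\<forall>Q\<in>D k. \<exists>a. Q = hcube a (2 powr (- real_of_int k)))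
        \<and> (\<forall>x. \<exists>!Q. Q \<in> D k \<and> x \<in> Q))
   \<and> (\<forall>j k Q P. j \<le> k \<longrightarrow> Q \<in> D k \<longrightarrow> P \<in> D j \<longrightarrow> Q \<subseteq> P \<or> Q \<inter> P = {})"

definition grid_cubes :: "(int \<Rightarrow> 'n::finite pt set set) \<Rightarrow> 'n pt set set" where
  "grid_cubes D = (\<Union>k. D k)"

definition parent :: "(int \<Rightarrow> 'n::finite pt set set) \<Rightarrow> 'n pt set \<Rightarrow> 'n pt set" where
  "parent D Q = (THE P. \<exists>k. Q \<in> D k \<and> P \<in> D (k - 1) \<and> Q \<subseteq> P)"

definition weight :: "('n::finite pt \<Rightarrow> real) \<Rightarrow> bool" where
  "weight \<sigma> \<longleftrightarrow> \<sigma> \<in> borel_measurable lborel \<and> (\<forall>x. 0 \<le> \<sigma> x)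
     \<and> (\<forall>K. compact K \<longrightarrow> set_integrable lborel K \<sigma>)
     \<and> (AE x in lborel. 0 < \<sigma> x)"

definition avg :: "('n::finite pt \<Rightarrow> real) \<Rightarrow> ('n pt \<Rightarrow> real) \<Rightarrow> 'n pt set \<Rightarrow> real" where
  "avg \<sigma> g R = (LINT x:R|lborel. g x * \<sigma> x) / measure lborel R"

text \<open>The q-th power of the operator, over the cube family C: the (possibly infinite)
  sum of nonnegative terms, i.e. the supremum of finite partial sums.\<close>
definition Tq :: "'n::finite pt set set \<Rightarrow> ('n pt set \<Rightarrow> real) \<Rightarrow> real \<Rightarrow> ('n pt \<Rightarrow> real)
     \<Rightarrow> ('n pt \<Rightarrow> real) \<Rightarrow> 'n pt \<Rightarrow> ennreal" where
  "Tq C \<tau> q \<sigma> g x = (SUP F\<in>{F. finite F \<and> F \<subseteq> C}.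
      \<Sum>R\<in>F. ennreal (\<bar>\<tau> R * avg \<sigma> g R * indicator R x\<bar> powr q))"

definition ennroot :: "real \<Rightarrow> ennreal \<Rightarrow> ennreal" where
  "ennroot q t = (if t = top then top else ennreal (enn2real t powr (1 / q)))"

definition Tbar :: "'n::finite pt set set \<Rightarrow> ('n pt set \<Rightarrow> real) \<Rightarrow> real \<Rightarrow> ('n pt \<Rightarrow> real)
     \<Rightarrow> ('n pt \<Rightarrow> real) \<Rightarrow> 'n pt \<Rightarrow> ennreal" where
  "Tbar C \<tau> q \<sigma> g x = ennroot q (Tq C \<tau> q \<sigma> g x)"

definition Tin :: "'n::finite pt set set \<Rightarrow> ('n pt set \<Rightarrow> real) \<Rightarrow> real \<Rightarrow> 'n pt set
     \<Rightarrow> ('n pt \<Rightarrow> real) \<Rightarrow> ('n pt \<Rightarrow> real) \<Rightarrow> 'n pt \<Rightarrow> ennreal" where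
  "Tin C \<tau> q P \<sigma> g x = Tbar {R\<in>C. R \<subseteq> P} \<tau> q \<sigma> g x"

definition Omega :: "'n::finite pt set set \<Rightarrow> ('n pt set \<Rightarrow> real) \<Rightarrow> real \<Rightarrow> ('n pt \<Rightarrow> real)
     \<Rightarrow> ('n pt \<Rightarrow> real) \<Rightarrow> int \<Rightarrow> 'n pt set" where
  "Omega C \<tau> q \<sigma> f k = {x. ennreal (2 powr real_of_int k) < Tbar C \<tau> q \<sigma> f x}"

definition whitney :: "(int \<Rightarrow> 'n::finite pt set set) \<Rightarrow> (int \<Rightarrow> 'n pt set)
     \<Rightarrow> (int \<Rightarrow> 'n pt set set) \<Rightarrow> bool" where
  "whitney D Om W \<longleftrightarrow>
     (\<forall>k. W k \<subseteq> grid_cubes D \<and> disjoint (W k) \<and> Om k = \<Union>(W k)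
        \<and> (\<forall>Q\<in>W k. parent D Q \<subseteq> Om k \<and> parent D (parent D Q) \<inter> - Om k \<noteq> {}))
   \<and> (\<exists>C::real. \<forall>k x. finite {Q\<in>W k. x \<in> parent D Q}
        \<and> real (card {Q\<in>W k. x \<in> parent D Q}) \<le> C * indicator (Om k) x)
   \<and> (\<exists>C::real. \<forall>k. \<forall>Q\<in>W k. finite {Q'\<in>W k. Q' \<inter> parent D Q \<noteq> {}}
        \<and> real (card {Q'\<in>W k. Q' \<inter> parent D Q \<noteq> {}}) \<le> C)
   \<and> (\<forall>k l Q Q'. Q \<in> W k \<longrightarrow> Q' \<in> W l \<longrightarrow> Q \<subset> Q' \<longrightarrow> k > l)"

end

theory Submission
  imports Defs
begin

lemma real_part:
  fixes a b c u q :: real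
  assumes q: "1 < q" and u: "0 < u" and ab: "a \<le> b + c" and a0: "0 \<le> a" and c0: "0 \<le> c"
    and ha: "4 * u < a powr (1/q)" and hc: "c powr (1/q) \<le> u"
  shows "u \<le> b powr (1/q)"
proof -
  have "(4*u) powr q < (a powr (1/q)) powr q"
    using ha u q by (intro powr_less_mono2) auto
  also have "\<dots> = a" using a0 q by (simp add: powr_powr)
  finally have a1: "(4*u) powr q < a" .
  have "(4::real) powr q \<ge> 4 powr 1" using q by (intro powr_mono) auto
  hence "(4*u) powr q \<ge> 4 * u powr q" using u by (simp add: powr_mult)
  with a1 have a2: "4 * u powr q < a" by linarith
  have "(c powr (1/q)) powr q \<le> u powr q" using hc q c0 by (intro powr_mono2) auto
  hence c1: "c \<le> u powr q" using c0 q by (simp add: powr_powr)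
  have b1: "u powr q \<le> b" using a2 c1 ab u by (smt (verit) powr_gt_zero)
  have "(u powr q) powr (1/q) \<le> b powr (1/q)" using b1 q u by (intro powr_mono2) auto
  thus ?thesis using q u by (simp add: powr_powr)
qed


lemma grid_cube:
  assumes "dyadic_grid D" "Q \<in> D k"
  shows "\<exists>a. Q = hcube a (2 powr (- real_of_int k))"
  using assms unfolding dyadic_grid_def by metis

lemma grid_cover:
  assumes "dyadic_grid D"
  shows "\<exists>Q. Q \<in> D k \<and> x \<in> Q"
  using assms unfolding dyadic_grid_def by metis

lemma grid_uniq:
  assumes "dyadic_grid D" "Q \<in> D k" "x \<in> Q" "P \<in> D k" "x \<in> P"
  shows "P = Q"
proof -
  have "\<exists>!Q. Q \<in> D k \<and> x \<in> Q" using assms(1) unfolding dyadic_grid_def by metis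
  thus ?thesis using assms by metis
qed

lemma grid_nest:
  assumes "dyadic_grid D" "j \<le> k" "Q \<in> D k" "P \<in> D j"
  shows "Q \<subseteq> P \<or> Q \<inter> P = {}"
  using assms unfolding dyadic_grid_def by metis

lemma hcube_side:
  fixes a b :: "real^'n::finite"
  assumes s: "0 < s" and t: "0 < t" and eq: "hcube a s = hcube b t"
  shows "s = t"
proof -
  have "a \<in> hcube a s" using s by (simp add: hcube_def)
  hence "a \<in> hcube b t" using eq by simp
  hence 1: "\<forall>i. b $ i \<le> a $ i" by (simp add: hcube_def)
  have "b \<in> hcube b t" using t by (simp add: hcube_def)
  hence "b \<in> hcube a s" using eq by simp
  hence 2: "\<forall>i. a $ i \<le> b $ i" by (simp add: hcube_def)
  have ab: "a = b" using 1 2 by (simp add: vec_eq_iff order_antisym)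
  show ?thesis
  proof (rule ccontr)
    assume "s \<noteq> t"
    then consider "s < t" | "t < s" by linarith
    thus False
    proof cases
      case 1
      define c :: "real^'n" where "c = (\<chi> i. a $ i + s)"
      have "c \<in> hcube a t" using 1 s by (simp add: hcube_def c_def)
      moreover have "c \<notin> hcube a s" by (simp add: hcube_def c_def)
      ultimately show False using eq ab by simp
    next
      case 2
      define c :: "real^'n" where "c = (\<chi> i. a $ i + t)"
      have "c \<in> hcube a s" using 2 t by (simp add: hcube_def c_def)
      moreover have "c \<notin> hcube a t" by (simp add: hcube_def c_def)
      ultimately show False using eq ab by simp
    qed
  qed
qed

lemma gen_unique:
  assumes g: "dyadic_grid D" and "Q \<in> D k" and "Q \<in> D j"
  shows "k = j"
proof -
  obtain a where a: "Q = hcube a (2 powr (- real_of_int k))" using grid_cube[OF g assms(2)] by blast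
  obtain b where b: "Q = hcube b (2 powr (- real_of_int j))" using grid_cube[OF g assms(3)] by blast
  have "2 powr (- real_of_int k) = 2 powr (- real_of_int j)"
    using hcube_side[of "2 powr (- real_of_int k)" "2 powr (- real_of_int j)" a b] a b by simp
  hence "- real_of_int k = - real_of_int j" using powr_inj[of 2] by simp
  thus ?thesis by simp
qed

lemma cube_nonempty:
  assumes g: "dyadic_grid D" and "Q \<in> D k"
  shows "\<exists>a. a \<in> Q"
proof -
  obtain a where a: "Q = hcube a (2 powr (- real_of_int k))" using grid_cube[OF g assms(2)] by blast
  hence "a \<in> Q" by (simp add: hcube_def)
  thus ?thesis by blast
qed

lemma parent_props:
  assumes g: "dyadic_grid D" and Q: "Q \<in> D k"
  shows "parent D Q \<in> D (k - 1) \<and> Q \<subseteq> parent D Q"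
proof -
  obtain a where a: "a \<in> Q" using cube_nonempty[OF g Q] by blast
  obtain P where P: "P \<in> D (k-1)" "a \<in> P" using grid_cover[OF g] by blast
  have "Q \<subseteq> P \<or> Q \<inter> P = {}" using grid_nest[OF g _ Q P(1)] by simp
  hence QP: "Q \<subseteq> P" using a P by blast
  have "parent D Q = P"
    unfolding parent_def
  proof (rule the_equality)
    show "\<exists>k. Q \<in> D k \<and> P \<in> D (k - 1) \<and> Q \<subseteq> P" using Q P QP by blast
  next
    fix P' assume "\<exists>k. Q \<in> D k \<and> P' \<in> D (k - 1) \<and> Q \<subseteq> P'"
    then obtain k' where k': "Q \<in> D k'" "P' \<in> D (k' - 1)" "Q \<subseteq> P'" by blast
    have "k' = k" using gen_unique[OF g k'(1) Q] .
    hence "P' \<in> D (k-1)" "a \<in> P'" using k' a by auto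
    thus "P' = P" using grid_uniq[OF g P(1) P(2)] by blast
  qed
  thus ?thesis using P QP by simp
qed



lemma avg_restrict:
  assumes "R \<subseteq> P"
  shows "avg \<sigma> (\<lambda>y. indicator P y * f y) R = avg \<sigma> f R"
proof -
  have "(\<lambda>y. indicator R y *\<^sub>R (indicator P y * f y * \<sigma> y)) = (\<lambda>y. indicator R y *\<^sub>R (f y * \<sigma> y))"
    using assms by (intro ext) (auto split: split_indicator)
  thus ?thesis unfolding avg_def set_lebesgue_integral_def by (simp only:)
qed

theorem lemma3p5:
  fixes D :: "int \<Rightarrow> (real^'n::finite) set set"
    and Qc :: "(real^'n) set set"
    and \<tau> :: "(real^'n) set \<Rightarrow> real"
    and \<sigma> w f :: "real^'n \<Rightarrow> real"
    and q :: real
    and W :: "int \<Rightarrow> (real^'n) set set"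
  assumes grid: "dyadic_grid D"
    and Qc: "Qc \<subseteq> grid_cubes D"
    and tau: "\<forall>R\<in>Qc. 0 \<le> \<tau> R"
    and sigma: "weight \<sigma>" and w: "weight w"
    and q: "1 < q"
    and f_meas: "f \<in> borel_measurable lborel"
    and f_nonneg: "\<forall>x. 0 \<le> f x"
    and f_bdd: "bounded (range f)"
    and f_supp: "\<exists>K. compact K \<and> (\<forall>x. x \<notin> K \<longrightarrow> f x = 0)"
    and W: "whitney D (Omega Qc \<tau> q \<sigma> f) W"
  shows "\<forall>k. \<forall>Q\<in>W k. \<forall>x\<in>Q \<inter> (Omega Qc \<tau> q \<sigma> f (k + 2) - Omega Qc \<tau> q \<sigma> f (k + 3)).
           ennreal (2 powr real_of_int k)
             \<le> Tin Qc \<tau> q (parent D Q) \<sigma> (\<lambda>y. indicator (parent D Q) y * f y) x"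
proof (intro allI ballI)
  fix k Q x
  assume QW: "Q \<in> W k" and xE: "x \<in> Q \<inter> (Omega Qc \<tau> q \<sigma> f (k + 2) - Omega Qc \<tau> q \<sigma> f (k + 3))"
  define P where "P = parent D Q"
  define g where "g = (\<lambda>y. indicator P y * f y)"
  define t where "t = (\<lambda>h y R. ennreal (\<bar>\<tau> R * avg \<sigma> h R * indicator R y\<bar> powr q))"
  have Wk: "W k \<subseteq> grid_cubes D" "\<forall>Q\<in>W k. parent D Q \<subseteq> Omega Qc \<tau> q \<sigma> f k \<and> parent D (parent D Q) \<inter> - Omega Qc \<tau> q \<sigma> f k \<noteq> {}"
  proof -
    have "\<forall>k. W k \<subseteq> grid_cubes D \<and> disjoint (W k) \<and> Omega Qc \<tau> q \<sigma> f k = \<Union>(W k)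
        \<and> (\<forall>Q\<in>W k. parent D Q \<subseteq> Omega Qc \<tau> q \<sigma> f k \<and> parent D (parent D Q) \<inter> - Omega Qc \<tau> q \<sigma> f k \<noteq> {})"
      using W unfolding whitney_def by (rule conjunct1)
    hence "W k \<subseteq> grid_cubes D \<and> disjoint (W k) \<and> Omega Qc \<tau> q \<sigma> f k = \<Union>(W k)
        \<and> (\<forall>Q\<in>W k. parent D Q \<subseteq> Omega Qc \<tau> q \<sigma> f k \<and> parent D (parent D Q) \<inter> - Omega Qc \<tau> q \<sigma> f k \<noteq> {})"
      by (rule spec)
    thus "W k \<subseteq> grid_cubes D" "\<forall>Q\<in>W k. parent D Q \<subseteq> Omega Qc \<tau> q \<sigma> f k \<and> parent D (parent D Q) \<inter> - Omega Qc \<tau> q \<sigma> f k \<noteq> {}"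
      by blast+
  qed
  obtain j where Qj: "Q \<in> D j" using Wk(1) QW unfolding grid_cubes_def by blast
  have PP: "P \<in> D (j-1)" "Q \<subseteq> P" using parent_props[OF grid Qj] P_def by auto
  have PP2: "parent D P \<in> D (j-1-1)" "P \<subseteq> parent D P" using parent_props[OF grid PP(1)] by auto
  obtain z where z: "z \<in> parent D P" "z \<notin> Omega Qc \<tau> q \<sigma> f k" using Wk(2) QW P_def by blast
  have xQ: "x \<in> Q" and xO: "x \<in> Omega Qc \<tau> q \<sigma> f (k + 2)" using xE by auto
  have xP: "x \<in> P" using xQ PP by auto
  have key: "z \<in> R" if R: "R \<in> Qc" "x \<in> R" "\<not> R \<subseteq> P" for R
  proof -
    obtain i where Ri: "R \<in> D i" using R Qc unfolding grid_cubes_def by blast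
    show ?thesis
    proof (cases "j - 1 \<le> i")
      case True
      have "R \<subseteq> P \<or> R \<inter> P = {}" using grid_nest[OF grid True Ri PP(1)] .
      thus ?thesis using R xP by blast
    next
      case False
      hence "i \<le> j - 1 - 1" by simp
      have "parent D P \<subseteq> R \<or> parent D P \<inter> R = {}" using grid_nest[OF grid \<open>i \<le> j - 1 - 1\<close> PP2(1) Ri] .
      thus ?thesis using R xP PP2 z by blast
    qed
  qed
  define A where "A = Tq Qc \<tau> q \<sigma> f x"
  define B where "B = Tq {R\<in>Qc. R \<subseteq> P} \<tau> q \<sigma> g x"
  define Z where "Z = Tq Qc \<tau> q \<sigma> f z"
  have ABZ: "A \<le> B + Z"
    unfolding A_def Tq_def
  proof (rule SUP_least)
    fix F assume F: "F \<in> {F. finite F \<and> F \<subseteq> Qc}"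
    have pt: "t f x R \<le> (if R \<subseteq> P then t g x R else 0) + t f z R" if "R \<in> F" for R
    proof (cases "R \<subseteq> P")
      case True
      thus ?thesis unfolding t_def g_def using avg_restrict[OF True] by simp
    next
      case False
      show ?thesis
      proof (cases "x \<in> R")
        case True
        hence "z \<in> R" using key[of R] F that False by blast
        thus ?thesis using True False unfolding t_def by simp
      next
        case False
        thus ?thesis unfolding t_def using q by simp
      qed
    qed
    have "(\<Sum>R\<in>F. t f x R) \<le> (\<Sum>R\<in>F. (if R \<subseteq> P then t g x R else 0) + t f z R)"
      by (rule sum_mono) (use pt in auto)
    also have "\<dots> = (\<Sum>R\<in>F. (if R \<subseteq> P then t g x R else 0)) + (\<Sum>R\<in>F. t f z R)"
      by (rule sum.distrib)
    also have "(\<Sum>R\<in>F. (if R \<subseteq> P then t g x R else 0)) = (\<Sum>R\<in>{R\<in>F. R \<subseteq> P}. t g x R)"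
      using F by (simp add: sum.inter_filter)
    also have "\<dots> \<le> B" unfolding B_def Tq_def t_def
      by (rule SUP_upper) (use F in auto)
    also have "(\<Sum>R\<in>F. t f z R) \<le> Z" unfolding Z_def Tq_def t_def
      by (rule SUP_upper) (use F in auto)
    finally show "(\<Sum>R\<in>F. ennreal (\<bar>\<tau> R * avg \<sigma> f R * indicator R x\<bar> powr q)) \<le> B + Z"
      unfolding t_def by (simp add: add_mono)
  qed
  have hA: "ennreal (2 powr real_of_int (k+2)) < ennroot q A"
    using xO unfolding Omega_def Tbar_def A_def by simp
  have hZ: "\<not> ennreal (2 powr real_of_int k) < ennroot q Z"
    using z(2) unfolding Omega_def Tbar_def Z_def by simp
  have Zfin: "Z \<noteq> top" using hZ unfolding ennroot_def by auto
  have hZ': "enn2real Z powr (1/q) \<le> 2 powr real_of_int k"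
    using hZ Zfin unfolding ennroot_def by (simp add: not_less ennreal_le_iff)
  have goal: "ennreal (2 powr real_of_int k) \<le> ennroot q B"
  proof (cases "B = top")
    case True thus ?thesis unfolding ennroot_def by simp
  next
    case Bfin: False
    have BZ: "B + Z \<noteq> top" using Bfin Zfin by simp
    have Afin: "A \<noteq> top" using ABZ BZ by (auto simp: top_unique)
    have hA': "2 powr real_of_int (k+2) < enn2real A powr (1/q)"
      using hA Afin unfolding ennroot_def by (simp add: ennreal_less_iff)
    have "2 powr real_of_int (k+2) = 4 * 2 powr real_of_int k"
      by (simp add: powr_add)
    hence hA'': "4 * 2 powr real_of_int k < enn2real A powr (1/q)" using hA' by simp
    have "enn2real A \<le> enn2real B + enn2real Z"
    proof -
      have "enn2real A \<le> enn2real (B + Z)" using ABZ BZ by (intro enn2real_mono) (auto simp: top.not_eq_extremum)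
      also have "\<dots> = enn2real B + enn2real Z" using Bfin Zfin by (intro enn2real_plus) (auto simp: top.not_eq_extremum)
      finally show ?thesis .
    qed
    hence "2 powr real_of_int k \<le> enn2real B powr (1/q)"
      using real_part[OF q _ _ _ _ hA'' hZ'] by simp
    thus ?thesis using Bfin unfolding ennroot_def by (simp add: ennreal_leI)
  qed
  show "ennreal (2 powr real_of_int k) \<le> Tin Qc \<tau> q (parent D Q) \<sigma> (\<lambda>y. indicator (parent D Q) y * f y) x"
    using goal unfolding Tin_def Tbar_def B_def g_def P_def by simp
qed

end
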